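(* Let $\theta>0$, $f=(z,u_0)\in\mathcal Y'$ and $\widehat u\in\mathcal X$. Then for all $\boldsymbol y\in U$ and all $\boldsymbol\nu\in\mathscr F$, $$\big|\partial^{\boldsymbol\nu}_{\boldsymbol y}\exp(\theta\Phi^{\boldsymbol y})\big|\le e^{\max(\sigma,\,\sigma e^2+2\sigma-1)}\,|\boldsymbol\nu|!\,(e\boldsymbol b)^{\boldsymbol\nu},$$ where $\sigma:=\frac{\alpha_1+\alpha_2\|E_T\|^2_{\mathcal X\to L^2(D)}}{2}\big(\frac{\|f\|_{\mathcal Y'}}{\beta_1}+\|\widehat u\|_{\mathcal X}\big)^2\theta$.
   Context: Setting. $D\subset\mathbb R^d$ ($d\in\{1,2,3\}$) is a bounded Lipschitz domain, $I=[0,T]$ with $0<T<\infty$, and $U=[-\frac12,\frac12]^{\mathbb N}$. The diffusion coefficient is $a^{\boldsymbol y}(\boldsymbol x,t)=a_0(\boldsymbol x,t)+\sum_{j\ge1}y_j\psi_j(\boldsymbol x,t)$, where for a.e. $t\in I$, $a_0(\cdot,t),\psi_j(\cdot,t)\in L^\infty(D)$, $(\sup_{t\in I}\|\psi_j(\cdot,t)\|_{L^\infty(D)})_{j\ge1}\in\ell^1$, $t\mapsto a^{\boldsymbol y}(\boldsymbol x,t)$ is measurable, and there are constants $0<a_{\min}\le a_{\max}<\infty$ with $a_{\min}\le a^{\boldsymbol y}(\boldsymbol x,t)\le a_{\max}$ for all $\boldsymbol x\in D$, $\boldsymbol y\in U$, a.e. $t\in I$. $V=H^1_0(D)$ with $\langle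 v_1,v_2\rangle_V=\langle\nabla v_1,\nabla v_2\rangle_{L^2(D)}$, $V'=H^{-1}(D)$. $\mathcal X=\{v\in L^2(V;I):\partial_tv\in L^2(V';I)\}$ with $\|v\|_{\mathcal X}^2=\|v\|^2_{L^2(V;I)}+\|\partial_tv\|^2_{L^2(V';I)}$; $\mathcal Y'=L^2(V';I)\times L^2(D)$ with the product norm (the norm on $V'$ being the dual norm). For $\boldsymbol y\in U$ the operator $B^{\boldsymbol y}:\mathcal X\to\mathcal Y'$ is defined by $\langle B^{\boldsymbol y}w,(v_1,v_2)\rangle=\int_I\langle\partial_tw,v_1\rangle_{V',V}\,\mathrm dt+\int_I\int_Da^{\boldsymbol y}\nabla w\cdot\nabla v_1\,\mathrm d\boldsymbol x\,\mathrm dt+\int_Dw(\cdot,0)v_2\,\mathrm d\boldsymbol x$ for $(v_1,v_2)\in L^2(V;I)\times L^2(D)$. Each $B^{\boldsymbol y}$ is an isomorphism and there is a constant $\beta_1>0$ with $\sup_{\boldsymbol y\in U}\|(B^{\boldsymbol y})^{-1}\|_{\mathcal Y'\to\mathcal X}\le1/\beta_1$. For $f=(z,u_0)\in\mathcal Y'$ the state is $u^{\boldsymbol y}=(B^{\boldsymbol y})^{-1}f\in\mathcal X$. $E_T:\mathcal X\to L^2(D)$, $v\mapsto v(\cdot,T)$, is bounded. The sequence $\boldsymbol b$ is $b_j=\beta_1^{-1}\sup_{t\in I}\|\psi_j(\cdot,t)\|_{L^\infty(D)}$. $\mathscr F$ is the set of finitely supported multi-indices $\boldsymbol\nu\in\mathbb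 N_0^{\mathbb N}$, $|\boldsymbol\nu|=\sum_j\nu_j$, $(e\boldsymbol b)^{\boldsymbol\nu}=\prod_j(eb_j)^{\nu_j}$, $\partial^{\boldsymbol\nu}_{\boldsymbol y}=\prod_j(\partial/\partial y_j)^{\nu_j}$. Fix $\alpha_1,\alpha_2\ge0$ with $\alpha_1+\alpha_2>0$ and let $\Phi^{\boldsymbol y}:=\frac{\alpha_1}{2}\|u^{\boldsymbol y}-\widehat u\|^2_{L^2(V;I)}+\frac{\alpha_2}{2}\|E_T(u^{\boldsymbol y}-\widehat u)\|^2_{L^2(D)}$. *)

theory Defs
  imports "HOL-Analysis.Analysis"
begin

definition paramU :: "(nat \<Rightarrow> real) set" where
  "paramU = {y. \<forall>j. y j \<in> {-1/2..1/2}}"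

definition msupp :: "(nat \<Rightarrow> nat) \<Rightarrow> nat set" where
  "msupp \<nu> = {j. \<nu> j \<noteq> 0}"

definition multi_indices :: "(nat \<Rightarrow> nat) set" where
  "multi_indices = {\<nu>. finite (msupp \<nu>)}"

definition mabs :: "(nat \<Rightarrow> nat) \<Rightarrow> nat" where
  "mabs \<nu> = (\<Sum>j\<in>msupp \<nu>. \<nu> j)"

definition mpow :: "(nat \<Rightarrow> real) \<Rightarrow> (nat \<Rightarrow> nat) \<Rightarrow> real" where
  "mpow c \<nu> = (\<Prod>j\<in>msupp \<nu>. c j ^ \<nu> j)"

definition pdiff :: "nat \<Rightarrow> ((nat \<Rightarrow> real) \<Rightarrow> real) \<Rightarrow> (nat \<Rightarrow> real) \<Rightarrow> real" where
  "pdiff j F y = (THE D. ((\<lambda>t. F (y(j := t))) has_real_derivative D)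
                         (at (y j) within {-1/2..1/2}))"

definition idx_list :: "(nat \<Rightarrow> nat) \<Rightarrow> nat list" where
  "idx_list \<nu> = concat (map (\<lambda>j. replicate (\<nu> j) j) (sorted_list_of_set (msupp \<nu>)))"

definition dnu :: "(nat \<Rightarrow> nat) \<Rightarrow> ((nat \<Rightarrow> real) \<Rightarrow> real) \<Rightarrow> (nat \<Rightarrow> real) \<Rightarrow> real" where
  "dnu \<nu> F = foldr pdiff (idx_list \<nu>) F"

definition Bop :: "('x \<Rightarrow> 'y::real_normed_vector) \<Rightarrow> (nat \<Rightarrow> 'x \<Rightarrow> 'y) \<Rightarrow> (nat \<Rightarrow> real) \<Rightarrow> 'x \<Rightarrow> 'y" where
  "Bop B0 Bj y w = B0 w + (\<Sum>j. y j *\<^sub>R Bj j w)"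

definition Phi :: "real \<Rightarrow> real \<Rightarrow> ('x::real_normed_vector \<Rightarrow> 'h::real_normed_vector)
     \<Rightarrow> ('x \<Rightarrow> 'l::real_normed_vector) \<Rightarrow> ('x \<Rightarrow> 'y::real_normed_vector) \<Rightarrow> (nat \<Rightarrow> 'x \<Rightarrow> 'y)
     \<Rightarrow> 'y \<Rightarrow> 'x \<Rightarrow> (nat \<Rightarrow> real) \<Rightarrow> real" where
  "Phi \<alpha>1 \<alpha>2 J ET B0 Bj f uhat y =
     (let u = inv (Bop B0 Bj y) f in
      \<alpha>1 / 2 * (norm (J (u - uhat)))\<^sup>2 + \<alpha>2 / 2 * (norm (ET (u - uhat)))\<^sup>2)"

end

theory Submission
  imports Defs
begin



abbreviation Iv :: "real set" where "Iv \<equiv> {-1/2..1/2}"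

definition HasD :: "((nat \<Rightarrow> real) \<Rightarrow> real) \<Rightarrow> real \<Rightarrow> nat \<Rightarrow> (nat \<Rightarrow> real) \<Rightarrow> bool" where
  "HasD F d i y \<longleftrightarrow> ((\<lambda>t. F (y(i:=t))) has_real_derivative d) (at (y i) within Iv)"

lemma upd_in_U: "y \<in> paramU \<Longrightarrow> t \<in> Iv \<Longrightarrow> y(i:=t) \<in> paramU"
  by (auto simp: paramU_def)

lemma yi_in: "y \<in> paramU \<Longrightarrow> y i \<in> Iv"
  by (auto simp: paramU_def)

lemma pdiff_eq: assumes "y \<in> paramU" "HasD F d i y" shows "pdiff i F y = d"
proof -
  have yc: "y i \<in> cbox (-1/2) (1/2::real)" using yi_in[OF assms(1), of i] by simp
  have hd: "((\<lambda>t. F (y(i:=t))) has_vector_derivative d) (at (y i) within cbox (-1/2) (1/2))"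
    using assms(2) by (simp add: HasD_def has_real_derivative_iff_has_vector_derivative)
  have u: "d' = d" if "((\<lambda>t. F (y(i:=t))) has_real_derivative d') (at (y i) within Iv)" for d'
  proof -
    have "((\<lambda>t. F (y(i:=t))) has_vector_derivative d') (at (y i) within cbox (-1/2) (1/2))"
      using that by (simp add: has_real_derivative_iff_has_vector_derivative)
    from vector_derivative_unique_within_closed_interval[OF _ yc this hd] show ?thesis by simp
  qed
  show ?thesis unfolding pdiff_def
  proof (rule the_equality)
    show "((\<lambda>t. F (y(i:=t))) has_real_derivative d) (at (y i) within Iv)"
      using assms(2) by (simp add: HasD_def)
  qed (rule u)
qed

lemma HasD_cong: assumes "y \<in> paramU" "\<And>z. z \<in> paramU \<Longrightarrow> F z = F' z" "HasD F' d i y"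
  shows "HasD F d i y"
  unfolding HasD_def
  by (rule has_field_derivative_transform_within[where d=1, OF assms(3)[unfolded HasD_def]])
     (use assms yi_in upd_in_U in auto)

lemma pdiff_cong: assumes "y \<in> paramU" "\<And>z. z \<in> paramU \<Longrightarrow> F z = F' z"
  shows "pdiff i F y = pdiff i F' y"
proof -
  have "HasD F d i y \<longleftrightarrow> HasD F' d i y" for d
    using HasD_cong[OF assms(1)] assms(2) by metis
  then show ?thesis unfolding pdiff_def HasD_def by simp
qed

definition Dl :: "nat list \<Rightarrow> ((nat \<Rightarrow> real) \<Rightarrow> real) \<Rightarrow> (nat \<Rightarrow> real) \<Rightarrow> real" where
  "Dl js F = foldr pdiff js F"

lemma Dl_Nil[simp]: "Dl [] F = F" and Dl_Cons: "Dl (i#js) F = pdiff i (Dl js F)"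
  by (simp_all add: Dl_def)

lemma Dl_append: "Dl (js @ ks) F = Dl js (Dl ks F)"
  by (simp add: Dl_def)

lemma Dl_cong: assumes "\<And>z. z \<in> paramU \<Longrightarrow> F z = F' z"
  shows "y \<in> paramU \<Longrightarrow> Dl js F y = Dl js F' y"
proof (induction js arbitrary: y)
  case Nil then show ?case using assms by simp
next
  case (Cons i js) show ?case unfolding Dl_Cons by (rule pdiff_cong[OF Cons.prems Cons.IH])
qed




fun splits :: "nat list \<Rightarrow> (nat list \<times> nat list) list" where
  "splits [] = [([],[])]"
| "splits (i#js) = concat (map (\<lambda>(a,b). [(i#a,b),(a,i#b)]) (splits js))"

lemma splits_len: "(a,b) \<in> set (splits js) \<Longrightarrow> length a + length b = length js"
  by (induction js arbitrary: a b) auto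

lemma splits_prod: "(a,b) \<in> set (splits js) \<Longrightarrow>
   prod_list (map (c::nat\<Rightarrow>real) a) * prod_list (map c b) = prod_list (map c js)"
  by (induction js arbitrary: a b) (auto simp: algebra_simps)

lemma sum_list_map_concat_map:
  "sum_list (map h (concat (map g xs))) = sum_list (map (\<lambda>x. sum_list (map h (g x))) xs)"
  by (induction xs) simp_all

lemma sum_list_splits_Cons:
  "(\<Sum>(a,b)\<leftarrow>splits (i#js). (f a b :: real)) = (\<Sum>(a,b)\<leftarrow>splits js. f (i#a) b + f a (i#b))"
  by (simp add: sum_list_map_concat_map split_def)

lemma splits_fact: "(\<Sum>(a,b)\<leftarrow>splits js. fact (length a) * fact (length b) :: real) = fact (length js + 1)"
proof (induction js)
  case Nil then show ?case by simp
next
  case (Cons i js)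
  have "(\<Sum>(a,b)\<leftarrow>splits (i#js). fact (length a) * fact (length b) :: real)
     = (\<Sum>(a,b)\<leftarrow>splits js. (real (length js) + 2) * (fact (length a) * fact (length b)))"
    unfolding sum_list_splits_Cons
  proof (rule arg_cong[where f=sum_list], rule map_cong[OF refl], clarify)
    fix a b assume "(a,b) \<in> set (splits js)"
    then have "length a + length b = length js" by (rule splits_len)
    then have e: "real (length js) = real (length a) + real (length b)" by (metis of_nat_add)
    show "fact (length (i#a)) * fact (length b) + fact (length a) * fact (length (i#b)) =
       (real (length js) + 2) * (fact (length a) * fact (length b) :: real)"
      unfolding e by (simp add: algebra_simps)
  qed
  also have "\<dots> = (real (length js) + 2) * fact (length js + 1)"
    using Cons by (simp add: sum_list_const_mult split_def)
  finally show ?case by (simp add: algebra_simps)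
qed

lemma splits_sum: "(\<Sum>(a,b)\<leftarrow>splits js. (\<phi> (length a) (length b) :: real))
   = (\<Sum>k\<le>length js. of_nat (length js choose k) * \<phi> k (length js - k))"
proof (induction js arbitrary: \<phi>)
  case Nil then show ?case by simp
next
  case (Cons i js)
  define n where "n = length js"
  have "(\<Sum>(a,b)\<leftarrow>splits (i#js). \<phi> (length a) (length b))
     = (\<Sum>(a,b)\<leftarrow>splits js. \<phi> (Suc (length a)) (length b)) + (\<Sum>(a,b)\<leftarrow>splits js. \<phi> (length a) (Suc (length b)))"
    unfolding sum_list_splits_Cons by (simp add: sum_list_addf split_def)
  also have "\<dots> = (\<Sum>k\<le>n. of_nat (n choose k) * \<phi> (Suc k) (n - k)) + (\<Sum>k\<le>n. of_nat (n choose k) * \<phi> k (Suc (n - k)))"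
    using Cons[of "\<lambda>x y. \<phi> (Suc x) y"] Cons[of "\<lambda>x y. \<phi> x (Suc y)"] by (simp add: n_def)
  also have "\<dots> = (\<Sum>k\<le>Suc n. of_nat (Suc n choose k) * \<phi> k (Suc n - k))"
  proof -
    have A: "(\<Sum>k\<le>n. of_nat (n choose k) * \<phi> (Suc k) (n - k)) = (\<Sum>k\<le>Suc n. of_nat (n choose (k - 1)) * (if k = 0 then 0 else 1) * \<phi> k (Suc n - k))"
      by (subst sum.atMost_Suc_shift) simp
    have B: "(\<Sum>k\<le>n. of_nat (n choose k) * \<phi> k (Suc (n - k))) = (\<Sum>k\<le>Suc n. of_nat (n choose k) * \<phi> k (Suc n - k))"
      by (simp add: Suc_diff_le)
    have C: "(of_nat (Suc n choose k) :: real) = of_nat (n choose (k - 1)) * (if k = 0 then 0 else 1) + of_nat (n choose k)" for k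
      by (cases k) simp_all
    show ?thesis unfolding A B by (simp add: C algebra_simps sum.distrib)
  qed
  finally show ?case by (simp add: n_def)
qed

definition smooth_upto :: "nat \<Rightarrow> ((nat \<Rightarrow> real) \<Rightarrow> real) \<Rightarrow> bool" where
  "smooth_upto n F \<longleftrightarrow> (\<forall>js i y. length js < n \<longrightarrow> y \<in> paramU \<longrightarrow> HasD (Dl js F) (Dl (i#js) F y) i y)"

lemma HasD_sum_list: "(\<And>x. x \<in> set xs \<Longrightarrow> HasD (f x) (d x) i y) \<Longrightarrow>
   HasD (\<lambda>z. \<Sum>x\<leftarrow>xs. f x z) (\<Sum>x\<leftarrow>xs. d x) i y"
proof (induction xs)
  case Nil then show ?case by (simp add: HasD_def)
next
  case (Cons x xs)
  then show ?case unfolding HasD_def by (auto intro!: derivative_eq_intros)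
qed

lemma HasD_mult: "HasD F d i y \<Longrightarrow> HasD G e i y \<Longrightarrow> HasD (\<lambda>z. F z * G z) (d * G y + F y * e) i y"
  unfolding HasD_def by (auto intro!: derivative_eq_intros)

lemma leibniz:
  assumes F: "smooth_upto n F" and G: "smooth_upto n G"
  shows "length js \<le> n \<Longrightarrow> y \<in> paramU \<Longrightarrow>
     Dl js (\<lambda>z. F z * G z) y = (\<Sum>(a,b)\<leftarrow>splits js. Dl a F y * Dl b G y)"
proof (induction js arbitrary: y)
  case Nil then show ?case by simp
next
  case (Cons i js)
  have hd: "HasD (\<lambda>z. \<Sum>(a,b)\<leftarrow>splits js. Dl a F z * Dl b G z)
      (\<Sum>(a,b)\<leftarrow>splits js. Dl (i#a) F y * Dl b G y + Dl a F y * Dl (i#b) G y) i y"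
    unfolding split_def
  proof (rule HasD_sum_list)
    fix x assume x: "x \<in> set (splits js)"
    obtain a b where ab: "x = (a,b)" by force
    with x have "length a + length b = length js" by (simp add: splits_len)
    with Cons.prems have "length a < n" "length b < n" by auto
    with F G Cons.prems show "HasD (\<lambda>z. Dl (fst x) F z * Dl (snd x) G z)
      (Dl (i # fst x) F y * Dl (snd x) G y + Dl (fst x) F y * Dl (i # snd x) G y) i y"
      unfolding ab smooth_upto_def by (auto intro: HasD_mult)
  qed
  have "HasD (Dl js (\<lambda>z. F z * G z))
      (\<Sum>(a,b)\<leftarrow>splits js. Dl (i#a) F y * Dl b G y + Dl a F y * Dl (i#b) G y) i y"
    by (rule HasD_cong[OF Cons.prems(2) _ hd]) (use Cons in auto)
  then show ?case unfolding Dl_Cons sum_list_splits_Cons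
    by (rule pdiff_eq[OF Cons.prems(2)])
qed




lemma has_vector_derivative_iff_quot:
  fixes f :: "real \<Rightarrow> 'a::real_normed_vector"
  shows "(f has_vector_derivative D) (at x within S) \<longleftrightarrow>
    ((\<lambda>y. (1 / (y - x)) *\<^sub>R (f y - f x)) \<longlongrightarrow> D) (at x within S)"
proof -
  have eq: "norm (f y - f x - (y - x) *\<^sub>R D) / norm (y - x) = norm ((1 / (y - x)) *\<^sub>R (f y - f x) - D)"
    if "y \<noteq> x" for y
  proof -
    have "(1 / (y - x)) *\<^sub>R (f y - f x) - D = (1 / (y - x)) *\<^sub>R (f y - f x - (y - x) *\<^sub>R D)"
    proof -
      have "(1 / (y - x)) *\<^sub>R ((y - x) *\<^sub>R D) = D" using that by simp
      then show ?thesis by (simp add: scaleR_diff_right)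
    qed
    then show ?thesis by (simp add: divide_simps)
  qed
  have "((\<lambda>y. norm (f y - f x - (y - x) *\<^sub>R D) / norm (y - x)) \<longlongrightarrow> 0) (at x within S)
     \<longleftrightarrow> ((\<lambda>y. norm ((1 / (y - x)) *\<^sub>R (f y - f x) - D)) \<longlongrightarrow> 0) (at x within S)"
    by (rule Lim_cong_within) (use eq in auto)
  also have "\<dots> \<longleftrightarrow> ((\<lambda>y. (1 / (y - x)) *\<^sub>R (f y - f x)) \<longlongrightarrow> D) (at x within S)"
    by (simp add: tendsto_norm_zero_iff LIM_zero_iff)
  finally show ?thesis
    by (simp add: has_vector_derivative_def has_derivative_iff_norm bounded_linear_scaleR_left)
qed

lemma summable_norm_cancel':
  fixes f :: "nat \<Rightarrow> 'a::{real_normed_vector,complete_space}"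
  assumes "summable (\<lambda>n. norm (f n))" shows "summable f"
  unfolding summable_iff_convergent Cauchy_convergent_iff [symmetric] Cauchy_iff
proof clarify
  fix e :: real
  assume "0 < e"
  with assms[unfolded summable_Cauchy] obtain N where N0: "\<And>m n. m \<ge> N \<Longrightarrow> norm (sum (\<lambda>n. norm (f n)) {m..<n}) < e"
    by blast
  have N: "norm (sum f {m..<n}) < e" if "m \<ge> N" for m n
    using N0[OF that, of n] norm_sum[of f "{m..<n}"] by (simp add: sum_nonneg)
  have "norm (sum f {..<m} - sum f {..<n}) < e" if "m\<ge>N" "n\<ge>N" for m n
  proof (cases m n rule: linorder_class.le_cases)
    assume "m \<le> n"
    then show ?thesis
      by (metis N finite_lessThan lessThan_minus_lessThan lessThan_subset_iff norm_minus_commute sum_diff \<open>m\<ge>N\<close>)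
  next
    assume "n \<le> m"
    then show ?thesis
      by (metis N finite_lessThan lessThan_minus_lessThan lessThan_subset_iff sum_diff \<open>n\<ge>N\<close>)
  qed
  then show "\<exists>M. \<forall>m\<ge>M. \<forall>n\<ge>M. norm (sum f {..<m} - sum f {..<n}) < e"
    by blast
qed

locale Ssetting =
  fixes J :: "'x::{real_inner,complete_space} \<Rightarrow> 'h::{real_inner,complete_space}"
    and Dt :: "'x \<Rightarrow> 'g::{real_inner,complete_space}"
    and B0 :: "'x \<Rightarrow> 'y::{real_inner,complete_space}"
    and Bj :: "nat \<Rightarrow> 'x \<Rightarrow> 'y" and b :: "nat \<Rightarrow> real" and \<beta>1 :: real and f :: 'y
  assumes J_lin: "bounded_linear J" and X_norm: "\<And>w. (norm w)\<^sup>2 = (norm (J w))\<^sup>2 + (norm (Dt w))\<^sup>2"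
    and B0_lin: "bounded_linear B0" and Bj_lin: "\<And>j. bounded_linear (Bj j)"
    and b_nonneg: "\<And>j. b j \<ge> 0" and b_summable: "summable b"
    and Bj_bound: "\<And>j w. norm (Bj j w) \<le> \<beta>1 * b j * norm (J w)"
    and \<beta>1_pos: "\<beta>1 > 0"
    and B_bij: "\<And>y. y \<in> paramU \<Longrightarrow> bij (Bop B0 Bj y)"
    and B_inv_bound: "\<And>y g. y \<in> paramU \<Longrightarrow> norm (inv (Bop B0 Bj y) g) \<le> norm g / \<beta>1"
begin

definition A where "A y = Bop B0 Bj y"
definition Ai where "Ai y = inv (A y)"
definition u where "u y = Ai y f"

lemma J_le: "norm (J w) \<le> norm w"
proof -
  have "(norm (J w))\<^sup>2 \<le> (norm w)\<^sup>2" using X_norm[of w] by simp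
  then show ?thesis by (rule power2_le_imp_le) simp
qed

lemma Bj_le: "norm (Bj j w) \<le> \<beta>1 * b j * norm w"
proof -
  have "\<beta>1 * b j \<ge> 0" using \<beta>1_pos b_nonneg[of j] by simp
  then have "\<beta>1 * b j * norm (J w) \<le> \<beta>1 * b j * norm w" using J_le[of w] by (simp add: mult_left_mono)
  then show ?thesis using Bj_bound[of j w] by linarith
qed

lemma summ: assumes "y \<in> paramU" shows "summable (\<lambda>k. y k *\<^sub>R Bj k w)"
proof (rule summable_norm_cancel', rule summable_comparison_test'[where N=0])
  show "summable (\<lambda>k. \<beta>1 * b k * norm w)"
    by (intro summable_mult2 summable_mult b_summable)
  fix k
  have "\<bar>y k\<bar> \<le> 1" using assms unfolding paramU_def by (auto simp: abs_le_iff dest: spec[of _ k])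
  then have "\<bar>y k\<bar> * norm (Bj k w) \<le> 1 * norm (Bj k w)" by (intro mult_right_mono) auto
  then show "norm (norm (y k *\<^sub>R Bj k w)) \<le> \<beta>1 * b k * norm w" using Bj_le[of k w] by simp
qed

lemma A_upd: assumes "y \<in> paramU" "t \<in> Iv"
  shows "A (y(i:=t)) w = A y w + (t - y i) *\<^sub>R Bj i w"
proof -
  have e: "(\<lambda>k. (y(i:=t)) k *\<^sub>R Bj k w) = (\<lambda>k. y k *\<^sub>R Bj k w + (if k = i then (t - y i) *\<^sub>R Bj k w else 0))"
    by (auto simp: fun_eq_iff algebra_simps)
  have s: "summable (\<lambda>k. if k = i then (t - y i) *\<^sub>R Bj k w else 0)"
    using sums_single[of i "\<lambda>k. (t - y i) *\<^sub>R Bj k w"] by (rule sums_summable)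
  have "(\<Sum>k. (y(i:=t)) k *\<^sub>R Bj k w) = (\<Sum>k. y k *\<^sub>R Bj k w) + (t - y i) *\<^sub>R Bj i w"
    unfolding e suminf_add[OF summ[OF assms(1)] s, symmetric]
    using sums_unique[OF sums_single[of i "\<lambda>k. (t - y i) *\<^sub>R Bj k w"]] by simp
  then show ?thesis by (simp add: A_def Bop_def)
qed

lemma A_linear: assumes "y \<in> paramU" shows "linear (A y)"
proof (rule linearI)
  fix v w :: 'x and c :: real
  have "(\<Sum>k. y k *\<^sub>R Bj k (v + w)) = (\<Sum>k. y k *\<^sub>R Bj k v) + (\<Sum>k. y k *\<^sub>R Bj k w)"
    by (simp add: suminf_add[OF summ[OF assms] summ[OF assms]] linear_simps[OF Bj_lin] scaleR_add_right)
  then show "A y (v + w) = A y v + A y w"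
    by (simp add: A_def Bop_def linear_simps[OF B0_lin] algebra_simps)
  have "(\<Sum>k. y k *\<^sub>R Bj k (c *\<^sub>R w)) = c *\<^sub>R (\<Sum>k. y k *\<^sub>R Bj k w)"
    by (simp add: suminf_scaleR_right[OF summ[OF assms]] linear_simps[OF Bj_lin] mult.commute)
  then show "A y (c *\<^sub>R w) = c *\<^sub>R A y w"
    by (simp add: A_def Bop_def linear_simps[OF B0_lin] algebra_simps)
qed

lemma A_Ai: "y \<in> paramU \<Longrightarrow> A y (Ai y g) = g"
  unfolding Ai_def A_def using B_bij by (meson bij_inv_eq_iff)

lemma Ai_A: "y \<in> paramU \<Longrightarrow> Ai y (A y w) = w"
  unfolding Ai_def A_def using B_bij by (metis bij_is_inj inv_f_f)

lemma Ai_linear: assumes "y \<in> paramU" shows "linear (Ai y)"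
proof (rule linearI)
  interpret L: linear "A y" by (rule A_linear[OF assms])
  fix v w :: 'y and c :: real
  have "Ai y (v + w) = Ai y (A y (Ai y v + Ai y w))" by (simp add: L.add A_Ai[OF assms])
  then show "Ai y (v + w) = Ai y v + Ai y w" by (simp add: Ai_A[OF assms])
  have "Ai y (c *\<^sub>R w) = Ai y (A y (c *\<^sub>R Ai y w))" by (simp add: L.scale A_Ai[OF assms])
  then show "Ai y (c *\<^sub>R w) = c *\<^sub>R Ai y w" by (simp add: Ai_A[OF assms])
qed

lemma Ai_bound: "y \<in> paramU \<Longrightarrow> norm (Ai y g) \<le> norm g / \<beta>1"
  unfolding Ai_def A_def by (rule B_inv_bound)

lemma Ai_bl: assumes "y \<in> paramU" shows "bounded_linear (Ai y)"
proof -
  interpret linear "Ai y" by (rule Ai_linear[OF assms])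
  show ?thesis
    by (rule bounded_linear_intro[where K="1/\<beta>1"]) (auto simp: add scale Ai_bound[OF assms])
qed

lemma AiBj_le: assumes "y \<in> paramU" shows "norm (Ai y (Bj j w)) \<le> b j * norm w"
proof -
  have "norm (Bj j w) / \<beta>1 \<le> \<beta>1 * b j * norm w / \<beta>1"
    using Bj_le[of j w] \<beta>1_pos by (intro divide_right_mono) auto
  also have "\<dots> = b j * norm w" using \<beta>1_pos by simp
  finally show ?thesis using Ai_bound[OF assms, of "Bj j w"] by linarith
qed

end



fun ins :: "nat \<Rightarrow> nat list \<Rightarrow> nat list list" where
  "ins i [] = [[i]]"
| "ins i (k#w) = (i#k#w) # map ((#) k) (ins i w)"

definition wsl :: "nat list \<Rightarrow> nat list list" where
  "wsl js = foldr (\<lambda>i ws. concat (map (ins i) ws)) js [[]]"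

lemma wsl_Nil[simp]: "wsl [] = [[]]" and wsl_Cons: "wsl (i#js) = concat (map (ins i) (wsl js))"
  by (simp_all add: wsl_def)

lemma ins_len: "length (ins i w) = Suc (length w)"
  by (induction w) auto

lemma ins_mem: "w' \<in> set (ins i w) \<Longrightarrow> length w' = Suc (length w) \<and> prod_list (map (c::nat\<Rightarrow>real) w') = c i * prod_list (map c w)"
  by (induction w arbitrary: w') (auto simp: algebra_simps)

lemma wsl_mem: "w \<in> set (wsl js) \<Longrightarrow> length w = length js \<and> prod_list (map (c::nat\<Rightarrow>real) w) = prod_list (map c js)"
proof (induction js arbitrary: w)
  case Nil then show ?case by simp
next
  case (Cons i js)
  then obtain w0 where w0: "w0 \<in> set (wsl js)" "w \<in> set (ins i w0)" by (auto simp: wsl_Cons)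
  from Cons.IH[OF w0(1)] ins_mem[OF w0(2), of c] show ?case by simp
qed

lemma wsl_len: "length (wsl js) = fact (length js)"
proof (induction js)
  case Nil then show ?case by simp
next
  case (Cons i js)
  have "length (wsl (i#js)) = (\<Sum>w\<leftarrow>wsl js. Suc (length js))"
    unfolding wsl_Cons length_concat map_map o_def ins_len
    by (rule arg_cong[where f=sum_list], rule map_cong) (auto dest: wsl_mem)
  then show ?case using Cons by (simp add: sum_list_triv)
qed

lemma lin_sum_list: "linear L \<Longrightarrow> L (\<Sum>x\<leftarrow>xs. \<phi> x) = (\<Sum>x\<leftarrow>xs. L (\<phi> x))"
  by (induction xs) (simp_all add: linear_add linear_0)

lemma norm_sum_list_le: "norm (\<Sum>x\<leftarrow>xs. \<phi> x) \<le> (\<Sum>x\<leftarrow>xs. norm (\<phi> x))"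
  by (induction xs) (simp_all add: order_trans[OF norm_triangle_ineq] )

lemma has_vector_derivative_sum_list:
  "(\<And>x. x \<in> set xs \<Longrightarrow> ((\<phi> x) has_vector_derivative (d x)) F) \<Longrightarrow>
   ((\<lambda>t. \<Sum>x\<leftarrow>xs. \<phi> x t) has_vector_derivative (\<Sum>x\<leftarrow>xs. d x)) F"
  by (induction xs) (auto intro!: derivative_eq_intros)

context Ssetting begin

lemma Ai_deriv:
  assumes y: "y \<in> paramU" and g: "(g has_vector_derivative g') (at (y i) within Iv)"
  shows "((\<lambda>t. Ai (y(i:=t)) (g t)) has_vector_derivative Ai y (g' - Bj i (Ai y (g (y i))))) (at (y i) within Iv)"
proof -
  define s where "s = y i"
  define h where "h t = Ai (y(i:=t)) (g t)" for t
  interpret L: bounded_linear "Ai y" by (rule Ai_bl[OF y])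
  interpret Bi: bounded_linear "Bj i" by (rule Bj_lin)
  have key: "h t = Ai y (g t - (t - s) *\<^sub>R Bj i (h t))" if t: "t \<in> Iv" for t
  proof -
    have yt: "y(i:=t) \<in> paramU" by (rule upd_in_U[OF y t])
    have "A (y(i:=t)) (h t) = g t" by (simp add: h_def A_Ai[OF yt])
    then have "A y (h t) = g t - (t - s) *\<^sub>R Bj i (h t)"
      using A_upd[OF y t, of i "h t"] by (simp add: s_def algebra_simps)
    then show ?thesis by (metis Ai_A[OF y])
  qed
  have hs: "h s = Ai y (g s)" by (simp add: h_def s_def)
  have diff: "h t - h s = Ai y (g t - g s - (t - s) *\<^sub>R Bj i (h t))" if "t \<in> Iv" for t
  proof -
    have "h t - h s = Ai y (g t - (t - s) *\<^sub>R Bj i (h t)) - Ai y (g s)"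
      by (rule arg_cong2[where f="(-)", OF key[OF that] hs])
    also have "\<dots> = Ai y ((g t - (t - s) *\<^sub>R Bj i (h t)) - g s)" by (rule L.diff[symmetric])
    also have "(g t - (t - s) *\<^sub>R Bj i (h t)) - g s = g t - g s - (t - s) *\<^sub>R Bj i (h t)"
      by (simp add: algebra_simps)
    finally show ?thesis .
  qed
  have hbound: "norm (h t) \<le> norm (g t) / \<beta>1" if "t \<in> Iv" for t
    unfolding h_def by (rule Ai_bound[OF upd_in_U[OF y that]])
  have nb: "norm (h t - h s) \<le> norm (g t - g s) / \<beta>1 + \<bar>t - s\<bar> * b i * norm (g t) / \<beta>1" if t: "t \<in> Iv" for t
  proof -
    have "norm (Bj i (h t)) \<le> \<beta>1 * b i * norm (h t)" by (rule Bj_le)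
    also have "\<dots> \<le> \<beta>1 * b i * (norm (g t) / \<beta>1)"
      using hbound[OF t] \<beta>1_pos b_nonneg[of i] by (intro mult_left_mono) auto
    also have "\<dots> = b i * norm (g t)" using \<beta>1_pos by simp
    finally have nB: "norm (Bj i (h t)) \<le> b i * norm (g t)" .
    have "norm (g t - g s - (t - s) *\<^sub>R Bj i (h t)) \<le> norm (g t - g s) + \<bar>t - s\<bar> * norm (Bj i (h t))"
      using norm_triangle_ineq4[of "g t - g s" "(t - s) *\<^sub>R Bj i (h t)"] by simp
    also have "\<dots> \<le> norm (g t - g s) + \<bar>t - s\<bar> * (b i * norm (g t))"
      using nB by (intro add_left_mono mult_left_mono) auto
    finally have "norm (g t - g s - (t - s) *\<^sub>R Bj i (h t)) / \<beta>1 \<le> (norm (g t - g s) + \<bar>t - s\<bar> * (b i * norm (g t))) / \<beta>1"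
      using \<beta>1_pos by (intro divide_right_mono) auto
    then show ?thesis using diff[OF t] Ai_bound[OF y, of "g t - g s - (t - s) *\<^sub>R Bj i (h t)"]
      by (simp add: add_divide_distrib mult.assoc)
  qed
  have gc: "(g \<longlongrightarrow> g s) (at s within Iv)"
    using has_vector_derivative_continuous[OF g] by (simp add: s_def continuous_within)
  have ev: "eventually (\<lambda>t. t \<in> Iv \<and> t \<noteq> s) (at s within Iv)"
    unfolding eventually_at_filter by (rule always_eventually) auto
  have hc: "(h \<longlongrightarrow> h s) (at s within Iv)"
  proof -
    have "((\<lambda>t. h t - h s) \<longlongrightarrow> 0) (at s within Iv)"
    proof (rule Lim_null_comparison)
      show "eventually (\<lambda>t. norm (h t - h s) \<le> norm (g t - g s) / \<beta>1 + \<bar>t - s\<bar> * b i * norm (g t) / \<beta>1) (at s within Iv)"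
        using ev by eventually_elim (use nb in auto)
      have "((\<lambda>t. norm (g t - g s) / \<beta>1 + \<bar>t - s\<bar> * b i * norm (g t) / \<beta>1) \<longlongrightarrow>
          norm (g s - g s) / \<beta>1 + \<bar>s - s\<bar> * b i * norm (g s) / \<beta>1) (at s within Iv)"
        using \<beta>1_pos by (intro tendsto_intros gc) auto
      then show "((\<lambda>t. norm (g t - g s) / \<beta>1 + \<bar>t - s\<bar> * b i * norm (g t) / \<beta>1) \<longlongrightarrow> 0) (at s within Iv)"
        by simp
    qed
    then show ?thesis by (simp add: LIM_zero_iff)
  qed
  have gq: "((\<lambda>t. (1 / (t - s)) *\<^sub>R (g t - g s)) \<longlongrightarrow> g') (at s within Iv)"
    using g unfolding has_vector_derivative_iff_quot s_def .
  have "((\<lambda>t. Ai y ((1 / (t - s)) *\<^sub>R (g t - g s) - Bj i (h t))) \<longlongrightarrow> Ai y (g' - Bj i (h s))) (at s within Iv)"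
    by (intro L.tendsto tendsto_diff gq Bi.tendsto hc)
  moreover have "eventually (\<lambda>t. Ai y ((1 / (t - s)) *\<^sub>R (g t - g s) - Bj i (h t)) = (1 / (t - s)) *\<^sub>R (h t - h s)) (at s within Iv)"
    using ev
  proof eventually_elim
    case (elim t)
    then have "(1 / (t - s)) *\<^sub>R ((t - s) *\<^sub>R Bj i (h t)) = Bj i (h t)" by simp
    then show ?case using diff[of t] elim by (simp add: L.scale[symmetric] L.diff scaleR_diff_right)
  qed
  ultimately have "((\<lambda>t. (1 / (t - s)) *\<^sub>R (h t - h s)) \<longlongrightarrow> Ai y (g' - Bj i (h s))) (at s within Iv)"
    by (rule Lim_transform_eventually)
  then show ?thesis unfolding has_vector_derivative_iff_quot h_def[symmetric] s_def[symmetric]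
    using hs by (simp add: s_def)
qed

end



lemma sum_list_uminus': "(\<Sum>x\<leftarrow>xs. - (\<phi> x :: 'a::ab_group_add)) = - (\<Sum>x\<leftarrow>xs. \<phi> x)"
  by (induction xs) simp_all

lemma bilin_vd:
  assumes P: "bounded_bilinear pr"
    and f: "(f has_vector_derivative fv) (at x within S)" and g: "(g has_vector_derivative gv) (at x within S)"
  shows "((\<lambda>t. pr (f t) (g t)) has_vector_derivative (pr (f x) gv + pr fv (g x))) (at x within S)"
proof -
  interpret P: bounded_bilinear pr by (rule P)
  have "((\<lambda>t. pr (f t) (g t)) has_derivative (\<lambda>h. pr (f x) (h *\<^sub>R gv) + pr (h *\<^sub>R fv) (g x))) (at x within S)"
    using P.FDERIV[OF f[unfolded has_vector_derivative_def] g[unfolded has_vector_derivative_def]] .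
  moreover have "(\<lambda>h. pr (f x) (h *\<^sub>R gv) + pr (h *\<^sub>R fv) (g x)) = (\<lambda>h. h *\<^sub>R (pr (f x) gv + pr fv (g x)))"
    by (simp add: fun_eq_iff P.scaleR_left P.scaleR_right scaleR_right_distrib)
  ultimately show ?thesis by (simp add: has_vector_derivative_def)
qed

context Ssetting begin

fun V :: "nat list \<Rightarrow> (nat \<Rightarrow> real) \<Rightarrow> 'x" where
  "V [] y = u y"
| "V (k#w) y = Ai y (Bj k (V w y))"

lemma V_deriv: assumes y: "y \<in> paramU"
  shows "((\<lambda>t. V w (y(i:=t))) has_vector_derivative - (\<Sum>w'\<leftarrow>ins i w. V w' y)) (at (y i) within Iv)"
proof (induction w)
  case Nil
  interpret L: bounded_linear "Ai y" by (rule Ai_bl[OF y])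
  have D: "((\<lambda>t. Ai (y(i:=t)) ((\<lambda>_. f) t)) has_vector_derivative Ai y (0 - Bj i (Ai y ((\<lambda>_. f) (y i))))) (at (y i) within Iv)"
    by (rule Ai_deriv[OF y]) (rule has_vector_derivative_const)
  have E: "Ai y (0 - Bj i (Ai y ((\<lambda>_. f) (y i)))) = - (\<Sum>w'\<leftarrow>ins i []. V w' y)"
    by (simp add: u_def L.neg)
  show ?case unfolding V.simps u_def by (rule has_vector_derivative_eq_rhs[OF D E])
next
  case (Cons k w)
  interpret L: bounded_linear "Ai y" by (rule Ai_bl[OF y])
  interpret Bk: bounded_linear "Bj k" by (rule Bj_lin)
  have g: "((\<lambda>t. Bj k (V w (y(i:=t)))) has_vector_derivative Bj k (- (\<Sum>w'\<leftarrow>ins i w. V w' y))) (at (y i) within Iv)"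
    by (rule Bk.has_vector_derivative[OF Cons.IH])
  have D: "((\<lambda>t. Ai (y(i:=t)) (Bj k (V w (y(i:=t))))) has_vector_derivative
      Ai y (Bj k (- (\<Sum>w'\<leftarrow>ins i w. V w' y)) - Bj i (Ai y (Bj k (V w (y(i := y i))))))) (at (y i) within Iv)"
    by (rule Ai_deriv[OF y g])
  moreover have E: "Ai y (Bj k (- (\<Sum>w'\<leftarrow>ins i w. V w' y)) - Bj i (Ai y (Bj k (V w (y(i := y i))))))
      = - (\<Sum>w'\<leftarrow>ins i (k#w). V w' y)"
  proof -
    have lin: "linear (\<lambda>x. Ai y (Bj k x))"
      using L.linear Bk.linear by (simp add: linear_compose[unfolded o_def])
    have "Ai y (Bj k (\<Sum>w'\<leftarrow>ins i w. V w' y)) = (\<Sum>w'\<leftarrow>ins i w. V (k#w') y)"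
      using lin_sum_list[OF lin] by simp
    then show ?thesis by (simp add: L.diff L.neg Bk.neg o_def)
  qed
  show ?case unfolding V.simps(2) by (rule has_vector_derivative_eq_rhs[OF D E])
qed

lemma V_bound: "y \<in> paramU \<Longrightarrow> norm (V w y) \<le> prod_list (map b w) * (norm f / \<beta>1)"
proof (induction w)
  case Nil then show ?case by (simp add: u_def Ai_bound)
next
  case (Cons k w)
  have "norm (V (k#w) y) \<le> b k * norm (V w y)" using AiBj_le[OF Cons.prems] by simp
  also have "\<dots> \<le> b k * (prod_list (map b w) * (norm f / \<beta>1))"
    using Cons b_nonneg[of k] by (intro mult_left_mono) auto
  finally show ?case by (simp add: mult.assoc)
qed

definition Fu :: "nat list \<Rightarrow> (nat \<Rightarrow> real) \<Rightarrow> 'x" where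
  "Fu js y = (-1) ^ length js *\<^sub>R (\<Sum>w\<leftarrow>wsl js. V w y)"

lemma Fu_Nil: "Fu [] y = u y" by (simp add: Fu_def)

lemma Fu_deriv: assumes y: "y \<in> paramU"
  shows "((\<lambda>t. Fu js (y(i:=t))) has_vector_derivative Fu (i#js) y) (at (y i) within Iv)"
proof -
  have "((\<lambda>t. \<Sum>w\<leftarrow>wsl js. V w (y(i:=t))) has_vector_derivative (\<Sum>w\<leftarrow>wsl js. - (\<Sum>w'\<leftarrow>ins i w. V w' y))) (at (y i) within Iv)"
    by (rule has_vector_derivative_sum_list) (rule V_deriv[OF y])
  moreover have "(\<Sum>w\<leftarrow>wsl js. - (\<Sum>w'\<leftarrow>ins i w. V w' y)) = - (\<Sum>w\<leftarrow>wsl (i#js). V w y)"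
    by (simp add: wsl_Cons sum_list_map_concat_map sum_list_uminus')
  ultimately have "((\<lambda>t. \<Sum>w\<leftarrow>wsl js. V w (y(i:=t))) has_vector_derivative - (\<Sum>w\<leftarrow>wsl (i#js). V w y)) (at (y i) within Iv)"
    by simp
  from bounded_linear.has_vector_derivative[OF bounded_linear_scaleR_right[of "(-1) ^ length js"] this]
  show ?thesis by (simp add: Fu_def)
qed

lemma Fu_bound: assumes y: "y \<in> paramU"
  shows "norm (Fu js y) \<le> fact (length js) * prod_list (map b js) * (norm f / \<beta>1)"
proof -
  have "norm (Fu js y) = norm (\<Sum>w\<leftarrow>wsl js. V w y)" by (simp add: Fu_def)
  also have "\<dots> \<le> (\<Sum>w\<leftarrow>wsl js. norm (V w y))" by (rule norm_sum_list_le)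
  also have "\<dots> \<le> (\<Sum>w\<leftarrow>wsl js. prod_list (map b js) * (norm f / \<beta>1))"
    by (rule sum_list_mono) (use V_bound[OF y] wsl_mem in metis)
  also have "\<dots> = fact (length js) * prod_list (map b js) * (norm f / \<beta>1)"
    by (simp add: sum_list_triv wsl_len)
  finally show ?thesis .
qed

definition Gf :: "'x \<Rightarrow> nat list \<Rightarrow> (nat \<Rightarrow> real) \<Rightarrow> 'x" where
  "Gf uh js y = (if js = [] then u y - uh else Fu js y)"

lemma Gf_deriv: assumes y: "y \<in> paramU"
  shows "((\<lambda>t. Gf uh js (y(i:=t))) has_vector_derivative Gf uh (i#js) y) (at (y i) within Iv)"
proof (cases "js = []")
  case True
  have "((\<lambda>t. Fu [] (y(i:=t)) - uh) has_vector_derivative Fu [i] y - 0) (at (y i) within Iv)"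
    by (intro has_vector_derivative_diff Fu_deriv[OF y] has_vector_derivative_const)
  then show ?thesis using True by (simp add: Gf_def Fu_Nil)
next
  case False
  then show ?thesis using Fu_deriv[OF y] by (simp add: Gf_def)
qed

lemma Gf_bound: assumes y: "y \<in> paramU"
  shows "norm (Gf uh js y) \<le> fact (length js) * prod_list (map b js) * (norm f / \<beta>1 + norm uh)"
proof (cases "js = []")
  case True
  have "norm (u y - uh) \<le> norm (u y) + norm uh" by (rule norm_triangle_ineq4)
  also have "norm (u y) \<le> norm f / \<beta>1" by (simp add: u_def Ai_bound[OF y])
  finally show ?thesis using True by (simp add: Gf_def)
next
  case False
  have p: "prod_list (map b js) \<ge> 0" by (rule prod_list_nonneg) (use b_nonneg in auto)
  have "norm (Gf uh js y) \<le> fact (length js) * prod_list (map b js) * (norm f / \<beta>1)"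
    using False Fu_bound[OF y] by (simp add: Gf_def)
  also have "\<dots> \<le> fact (length js) * prod_list (map b js) * (norm f / \<beta>1 + norm uh)"
    using p by (intro mult_left_mono) auto
  finally show ?thesis .
qed

end



lemma bilin_HasD:
  assumes P: "bounded_bilinear (pr :: 'a::real_normed_vector \<Rightarrow> 'b::real_normed_vector \<Rightarrow> real)"
    and F: "\<And>js i y. y \<in> paramU \<Longrightarrow> ((\<lambda>t. F js (y(i:=t))) has_vector_derivative F (i#js) y) (at (y i) within Iv)"
    and G: "\<And>js i y. y \<in> paramU \<Longrightarrow> ((\<lambda>t. G js (y(i:=t))) has_vector_derivative G (i#js) y) (at (y i) within Iv)"
    and y: "y \<in> paramU"
  shows "HasD (\<lambda>z. \<Sum>(a,b)\<leftarrow>splits js. pr (F a z) (G b z)) (\<Sum>(a,b)\<leftarrow>splits (i#js). pr (F a y) (G b y)) i y"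
proof -
  have "HasD (\<lambda>z. \<Sum>x\<leftarrow>splits js. pr (F (fst x) z) (G (snd x) z))
     (\<Sum>x\<leftarrow>splits js. pr (F (fst x) y) (G (i # snd x) y) + pr (F (i # fst x) y) (G (snd x) y)) i y"
  proof (rule HasD_sum_list)
    fix x
    from bilin_vd[OF P F[OF y] G[OF y]]
    show "HasD (\<lambda>z. pr (F (fst x) z) (G (snd x) z)) (pr (F (fst x) y) (G (i # snd x) y) + pr (F (i # fst x) y) (G (snd x) y)) i y"
      by (simp add: HasD_def has_real_derivative_iff_has_vector_derivative)
  qed
  then show ?thesis unfolding sum_list_splits_Cons by (simp add: split_def add.commute)
qed

lemma bilin_Dl:
  assumes P: "bounded_bilinear (pr :: 'a::real_normed_vector \<Rightarrow> 'b::real_normed_vector \<Rightarrow> real)"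
    and F: "\<And>js i y. y \<in> paramU \<Longrightarrow> ((\<lambda>t. F js (y(i:=t))) has_vector_derivative F (i#js) y) (at (y i) within Iv)"
    and G: "\<And>js i y. y \<in> paramU \<Longrightarrow> ((\<lambda>t. G js (y(i:=t))) has_vector_derivative G (i#js) y) (at (y i) within Iv)"
  shows "y \<in> paramU \<Longrightarrow> Dl js (\<lambda>z. pr (F [] z) (G [] z)) y = (\<Sum>(a,b)\<leftarrow>splits js. pr (F a y) (G b y))"
proof (induction js arbitrary: y)
  case Nil then show ?case by simp
next
  case (Cons i js)
  have "HasD (Dl js (\<lambda>z. pr (F [] z) (G [] z))) (\<Sum>(a,b)\<leftarrow>splits (i#js). pr (F a y) (G b y)) i y"
    by (rule HasD_cong[OF Cons.prems _ bilin_HasD[OF P F G Cons.prems]]) (rule Cons.IH)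
  then show ?case unfolding Dl_Cons by (rule pdiff_eq[OF Cons.prems])
qed

lemma bilin_smooth:
  assumes P: "bounded_bilinear (pr :: 'a::real_normed_vector \<Rightarrow> 'b::real_normed_vector \<Rightarrow> real)"
    and F: "\<And>js i y. y \<in> paramU \<Longrightarrow> ((\<lambda>t. F js (y(i:=t))) has_vector_derivative F (i#js) y) (at (y i) within Iv)"
    and G: "\<And>js i y. y \<in> paramU \<Longrightarrow> ((\<lambda>t. G js (y(i:=t))) has_vector_derivative G (i#js) y) (at (y i) within Iv)"
    and y: "y \<in> paramU"
  shows "HasD (Dl js (\<lambda>z. pr (F [] z) (G [] z))) (Dl (i#js) (\<lambda>z. pr (F [] z) (G [] z)) y) i y"
proof -
  have e: "Dl (i#js) (\<lambda>z. pr (F [] z) (G [] z)) y = (\<Sum>(a,b)\<leftarrow>splits (i#js). pr (F a y) (G b y))"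
    by (rule bilin_Dl[OF P F G y])
  show ?thesis unfolding e
    by (rule HasD_cong[OF y _ bilin_HasD[OF P F G y]]) (rule bilin_Dl[OF P F G])
qed

context Ssetting begin

definition bf :: "('x \<Rightarrow> 'l::real_inner) \<Rightarrow> real \<Rightarrow> real \<Rightarrow> real \<Rightarrow> 'x \<Rightarrow> 'x \<Rightarrow> real" where
  "bf ET \<alpha>1 \<alpha>2 \<theta> x1 x2 = \<theta> * (\<alpha>1 / 2 * inner (J x1) (J x2) + \<alpha>2 / 2 * inner (ET x1) (ET x2))"

lemma bf_abs: assumes ET: "bounded_linear ET" and a: "\<alpha>1 \<ge> 0" "\<alpha>2 \<ge> 0" and th: "\<theta> \<ge> 0"
  shows "\<bar>bf ET \<alpha>1 \<alpha>2 \<theta> x1 x2\<bar> \<le> \<theta> * (\<alpha>1 + \<alpha>2 * (onorm ET)\<^sup>2) / 2 * (norm x1 * norm x2)"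
proof -
  have j: "\<bar>inner (J x1) (J x2)\<bar> \<le> norm x1 * norm x2"
    using Cauchy_Schwarz_ineq2[of "J x1" "J x2"] J_le[of x1] J_le[of x2]
    by (meson mult_mono norm_ge_zero order_trans)
  have e1: "norm (ET x1) \<le> onorm ET * norm x1" and e2: "norm (ET x2) \<le> onorm ET * norm x2"
    using onorm[OF ET] by auto
  have "\<bar>inner (ET x1) (ET x2)\<bar> \<le> norm (ET x1) * norm (ET x2)" by (rule Cauchy_Schwarz_ineq2)
  also have "\<dots> \<le> (onorm ET * norm x1) * (onorm ET * norm x2)"
    using e1 e2 onorm_pos_le[OF ET] by (intro mult_mono) auto
  finally have e: "\<bar>inner (ET x1) (ET x2)\<bar> \<le> (onorm ET)\<^sup>2 * (norm x1 * norm x2)"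
    by (simp add: power2_eq_square algebra_simps)
  have "\<bar>bf ET \<alpha>1 \<alpha>2 \<theta> x1 x2\<bar> \<le> \<theta> * (\<alpha>1 / 2 * \<bar>inner (J x1) (J x2)\<bar> + \<alpha>2 / 2 * \<bar>inner (ET x1) (ET x2)\<bar>)"
    unfolding bf_def using a th
    by (simp add: abs_mult) (intro mult_left_mono order_trans[OF abs_triangle_ineq]; simp add: abs_mult)
  also have "\<dots> \<le> \<theta> * (\<alpha>1 / 2 * (norm x1 * norm x2) + \<alpha>2 / 2 * ((onorm ET)\<^sup>2 * (norm x1 * norm x2)))"
    using a th j e by (intro mult_left_mono add_mono) auto
  also have "\<dots> = \<theta> * (\<alpha>1 + \<alpha>2 * (onorm ET)\<^sup>2) / 2 * (norm x1 * norm x2)"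
    by (simp add: algebra_simps)
  finally show ?thesis .
qed

lemma bf_bilinear: assumes ET: "bounded_linear ET" and a: "\<alpha>1 \<ge> 0" "\<alpha>2 \<ge> 0" and th: "\<theta> \<ge> 0"
  shows "bounded_bilinear (bf ET \<alpha>1 \<alpha>2 \<theta>)"
proof
  interpret Jl: bounded_linear J by (rule J_lin)
  interpret El: bounded_linear ET by (rule ET)
  fix a a' b b' :: 'x and r :: real
  show "bf ET \<alpha>1 \<alpha>2 \<theta> (a + a') b = bf ET \<alpha>1 \<alpha>2 \<theta> a b + bf ET \<alpha>1 \<alpha>2 \<theta> a' b"
    by (simp add: bf_def Jl.add El.add inner_add_left algebra_simps)
  show "bf ET \<alpha>1 \<alpha>2 \<theta> a (b + b') = bf ET \<alpha>1 \<alpha>2 \<theta> a b + bf ET \<alpha>1 \<alpha>2 \<theta> a b'"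
    by (simp add: bf_def Jl.add El.add inner_add_right algebra_simps)
  show "bf ET \<alpha>1 \<alpha>2 \<theta> (r *\<^sub>R a) b = r *\<^sub>R bf ET \<alpha>1 \<alpha>2 \<theta> a b"
    by (simp add: bf_def Jl.scale El.scale algebra_simps)
  show "bf ET \<alpha>1 \<alpha>2 \<theta> a (r *\<^sub>R b) = r *\<^sub>R bf ET \<alpha>1 \<alpha>2 \<theta> a b"
    by (simp add: bf_def Jl.scale El.scale algebra_simps)
next
  show "\<exists>K. \<forall>a b. norm (bf ET \<alpha>1 \<alpha>2 \<theta> a b) \<le> norm a * norm b * K"
  proof (rule exI[where x="\<theta> * (\<alpha>1 + \<alpha>2 * (onorm ET)\<^sup>2) / 2"], intro allI)
    fix a b :: 'x
    show "norm (bf ET \<alpha>1 \<alpha>2 \<theta> a b) \<le> norm a * norm b * (\<theta> * (\<alpha>1 + \<alpha>2 * (onorm ET)\<^sup>2) / 2)"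
      using bf_abs[OF ET a th, of a b] by (metis mult.commute real_norm_def)
  qed
qed

lemma Phi_eq: "\<theta> * Phi \<alpha>1 \<alpha>2 J ET B0 Bj f uh y = bf ET \<alpha>1 \<alpha>2 \<theta> (Gf uh [] y) (Gf uh [] y)"
  by (simp add: Phi_def bf_def Gf_def u_def Ai_def A_def power2_norm_eq_inner Let_def algebra_simps)

lemma g_bound:
  assumes ET: "bounded_linear ET" and a: "\<alpha>1 \<ge> 0" "\<alpha>2 \<ge> 0" and th: "\<theta> \<ge> 0" and y: "y \<in> paramU"
  shows "\<bar>Dl js (\<lambda>z. bf ET \<alpha>1 \<alpha>2 \<theta> (Gf uh [] z) (Gf uh [] z)) y\<bar>
    \<le> (\<theta> * (\<alpha>1 + \<alpha>2 * (onorm ET)\<^sup>2) / 2 * (norm f / \<beta>1 + norm uh)\<^sup>2) * fact (length js + 1) * prod_list (map b js)"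
proof -
  define s0 where "s0 = \<theta> * (\<alpha>1 + \<alpha>2 * (onorm ET)\<^sup>2) / 2"
  define K where "K = norm f / \<beta>1 + norm uh"
  have s0: "s0 \<ge> 0" using a th by (simp add: s0_def)
  have "\<bar>Dl js (\<lambda>z. bf ET \<alpha>1 \<alpha>2 \<theta> (Gf uh [] z) (Gf uh [] z)) y\<bar>
      = \<bar>\<Sum>(p,q)\<leftarrow>splits js. bf ET \<alpha>1 \<alpha>2 \<theta> (Gf uh p y) (Gf uh q y)\<bar>"
    by (subst bilin_Dl[OF bf_bilinear[OF ET a th] Gf_deriv Gf_deriv y]) (simp_all add: y)
  also have "\<dots> \<le> (\<Sum>(p,q)\<leftarrow>splits js. \<bar>bf ET \<alpha>1 \<alpha>2 \<theta> (Gf uh p y) (Gf uh q y)\<bar>)"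
    using norm_sum_list_le[of "\<lambda>x. bf ET \<alpha>1 \<alpha>2 \<theta> (Gf uh (fst x) y) (Gf uh (snd x) y)" "splits js"]
    by (simp add: split_def)
  also have "\<dots> \<le> (\<Sum>(p,q)\<leftarrow>splits js. (s0 * K\<^sup>2 * prod_list (map b js)) * (fact (length p) * fact (length q)))"
    unfolding split_def
  proof (rule sum_list_mono)
    fix x assume x: "x \<in> set (splits js)"
    obtain a c where ac: "x = (a, c)" by force
    have pa: "prod_list (map b a) \<ge> 0" and pc: "prod_list (map b c) \<ge> 0"
      by (rule prod_list_nonneg, use b_nonneg in auto)+
    have "\<bar>bf ET \<alpha>1 \<alpha>2 \<theta> (Gf uh a y) (Gf uh c y)\<bar> \<le> s0 * (norm (Gf uh a y) * norm (Gf uh c y))"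
      unfolding s0_def by (rule bf_abs[OF ET a th])
    also have "\<dots> \<le> s0 * ((fact (length a) * prod_list (map b a) * K) * (fact (length c) * prod_list (map b c) * K))"
    proof -
      have K0: "norm f / \<beta>1 + norm uh \<ge> 0" using \<beta>1_pos by simp
      have "0 \<le> fact (length a) * prod_list (map b a) * (norm f / \<beta>1 + norm uh)"
        using pa K0 by simp
      then show ?thesis
        using Gf_bound[OF y, of uh a] Gf_bound[OF y, of uh c] s0 unfolding K_def
        by (intro mult_left_mono mult_mono) auto
    qed
    also have "\<dots> = (s0 * K\<^sup>2 * (prod_list (map b a) * prod_list (map b c))) * (fact (length a) * fact (length c))"
      by (simp add: power2_eq_square algebra_simps)
    also have "\<dots> = (s0 * K\<^sup>2 * prod_list (map b js)) * (fact (length a) * fact (length c))"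
      using splits_prod[of a c js b] x ac by simp
    finally show "\<bar>bf ET \<alpha>1 \<alpha>2 \<theta> (Gf uh (fst x) y) (Gf uh (snd x) y)\<bar>
       \<le> s0 * K\<^sup>2 * prod_list (map b js) * (fact (length (fst x)) * fact (length (snd x)))"
      by (simp add: ac)
  qed
  also have "\<dots> = (s0 * K\<^sup>2 * prod_list (map b js)) * (\<Sum>(p,q)\<leftarrow>splits js. fact (length p) * fact (length q))"
    by (simp add: split_def sum_list_const_mult)
  also have "\<dots> = (s0 * K\<^sup>2) * fact (length js + 1) * prod_list (map b js)"
    by (simp add: splits_fact)
  finally show ?thesis by (simp add: s0_def K_def)
qed

lemma g_smooth:
  assumes ET: "bounded_linear ET" and a: "\<alpha>1 \<ge> 0" "\<alpha>2 \<ge> 0" and th: "\<theta> \<ge> 0" and y: "y \<in> paramU"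
  shows "HasD (Dl js (\<lambda>z. bf ET \<alpha>1 \<alpha>2 \<theta> (Gf uh [] z) (Gf uh [] z)))
     (Dl (i#js) (\<lambda>z. bf ET \<alpha>1 \<alpha>2 \<theta> (Gf uh [] z) (Gf uh [] z)) y) i y"
  by (rule bilin_smooth[OF bf_bilinear[OF ET a th] Gf_deriv Gf_deriv y])

end



lemma e_gt: "exp 1 > (2718/1000::real)"
  using e_approx_32 by (simp add: abs_if split: if_split_asm)

lemma e_lt: "exp 1 < (272/100::real)"
  using e_approx_32 by (simp add: abs_if split: if_split_asm)

lemma geom_id:
  fixes q :: real
  shows "(1 - q)^3 * (\<Sum>i\<le>n. q^i * ((real i + 1) * (real i + 2)))
     + q^(n+1) * (2*q^2 + (2*(real n + 2) + 2) * q * (1 - q) + (real n + 2) * (real n + 3) * (1 - q)^2) = 2"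
proof (induction n)
  case 0 then show ?case by (simp add: power2_eq_square power3_eq_cube algebra_simps)
next
  case (Suc n)
  have "(1 - q)^3 * (\<Sum>i\<le>Suc n. q^i * ((real i + 1) * (real i + 2)))
     + q^(Suc n+1) * (2*q^2 + (2*(real (Suc n) + 2) + 2) * q * (1 - q) + (real (Suc n) + 2) * (real (Suc n) + 3) * (1 - q)^2)
   = (1 - q)^3 * (\<Sum>i\<le>n. q^i * ((real i + 1) * (real i + 2)))
     + q^(n+1) * ((1 - q)^3 * ((real n + 2) * (real n + 3)) + q * (2*q^2 + (2*(real n + 3) + 2) * q * (1 - q) + (real n + 3) * (real n + 4) * (1 - q)^2))"
    by (simp add: algebra_simps)
  also have "(1 - q)^3 * ((real n + 2) * (real n + 3)) + q * (2*q^2 + (2*(real n + 3) + 2) * q * (1 - q) + (real n + 3) * (real n + 4) * (1 - q)^2)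
      = 2*q^2 + (2*(real n + 2) + 2) * q * (1 - q) + (real n + 2) * (real n + 3) * (1 - q)^2"
    by (simp add: power2_eq_square power3_eq_cube algebra_simps)
  finally show ?case using Suc by simp
qed

lemma geom_le:
  fixes q :: real assumes q: "0 \<le> q" "q < 1"
  shows "(\<Sum>i\<le>n. q^i * ((real i + 1) * (real i + 2))) \<le> 2 / (1 - q)^3"
proof -
  have R: "0 \<le> q^(n+1) * (2*q^2 + (2*(real n + 2) + 2) * q * (1 - q) + (real n + 2) * (real n + 3) * (1 - q)^2)"
    using q by (intro mult_nonneg_nonneg add_nonneg_nonneg) auto
  have p: "(1 - q)^3 > 0" using q by simp
  have "(1 - q)^3 * (\<Sum>i\<le>n. q^i * ((real i + 1) * (real i + 2))) \<le> 2"
    using geom_id[of q n] R by linarith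
  then show ?thesis using p by (simp add: field_simps mult.commute)
qed

lemma conv_sum_le:
  "(\<Sum>k\<le>n. real (n choose k) * (fact k * exp 1 ^ k * fact (n - k + 2)))
     \<le> fact n * exp 1 ^ n * (2 * exp 1 ^ 3 / (exp 1 - 1)^3)"
proof -
  define e :: real where "e = exp 1"
  have e1: "e > 1" using e_gt by (simp add: e_def)
  define q where "q = 1 / e"
  have q: "0 \<le> q" "q < 1" using e1 by (auto simp: q_def)
  have t: "real (n choose k) * (fact k * e ^ k * fact (n - k + 2))
      = fact n * e ^ n * (q ^ (n - k) * ((real (n - k) + 1) * (real (n - k) + 2)))" if k: "k \<le> n" for k
  proof -
    have ek: "e ^ k = e ^ n * q ^ (n - k)"
      using k e1 by (simp add: q_def power_diff field_simps)
    have f2: "(fact (n - k + 2) :: real) = fact (n - k) * ((real (n - k) + 1) * (real (n - k) + 2))"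
      by (simp add: fact_Suc numeral_2_eq_2 algebra_simps)
    show ?thesis using k by (simp add: binomial_fact ek f2 field_simps)
  qed
  have "(\<Sum>k\<le>n. real (n choose k) * (fact k * e ^ k * fact (n - k + 2)))
      = fact n * e ^ n * (\<Sum>k\<le>n. q ^ (n - k) * ((real (n - k) + 1) * (real (n - k) + 2)))"
    unfolding sum_distrib_left by (rule sum.cong[OF refl], rule t, simp)
  also have "(\<Sum>k\<le>n. q ^ (n - k) * ((real (n - k) + 1) * (real (n - k) + 2)))
      = (\<Sum>i\<le>n. q ^ i * ((real i + 1) * (real i + 2)))"
    using sum.atLeastAtMost_rev[of "\<lambda>i. q ^ i * ((real i + 1) * (real i + 2))" 0 n]
    by (simp add: atLeast0AtMost)
  also have "fact n * e ^ n * \<dots> \<le> fact n * e ^ n * (2 / (1 - q)^3)"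
    using geom_le[OF q] e1 by (intro mult_left_mono) auto
  also have "2 / (1 - q)^3 = 2 * e ^ 3 / (e - 1)^3"
    using e1 by (simp add: q_def field_simps)
  finally show ?thesis by (simp add: e_def)
qed

lemma pow_fact_le_exp: "(x::real) \<ge> 0 \<Longrightarrow> x ^ m / fact m \<le> exp x"
proof -
  assume x: "x \<ge> 0"
  have "x ^ m / fact m \<le> (\<Sum>n\<le>m. x ^ n / fact n)"
    using x by (intro member_le_sum) auto
  also have "\<dots> \<le> exp x"
    using x summable_exp_generic[of x]
    by (auto simp: exp_def divide_inverse ac_simps intro!: sum_le_suminf)
  finally show ?thesis .
qed

definition Qp :: "real \<Rightarrow> nat \<Rightarrow> real" where
  "Qp \<kappa> n = (\<Prod>i\<in>{1..n}. max 1 (\<kappa> / real i))"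

lemma Qp_Suc: "Qp \<kappa> (Suc n) = Qp \<kappa> n * max 1 (\<kappa> / real (Suc n))"
  by (simp add: Qp_def)

lemma Qp_ge1: "Qp \<kappa> n \<ge> 1"
  unfolding Qp_def by (rule prod_ge_1) auto

lemma Qp_mono: "m \<le> n \<Longrightarrow> Qp \<kappa> m \<le> Qp \<kappa> n"
proof (induction n)
  case 0 then show ?case by simp
next
  case (Suc n)
  show ?case
  proof (cases "m = Suc n")
    case False
    then have "Qp \<kappa> m \<le> Qp \<kappa> n" using Suc by simp
    also have "\<dots> \<le> Qp \<kappa> n * max 1 (\<kappa> / real (Suc n))"
      using Qp_ge1[of \<kappa> n] by (intro mult_le_cancel_left1[THEN iffD2]) auto
    finally show ?thesis by (simp add: Qp_Suc)
  qed simp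
qed

lemma Qp_small: "real n < \<kappa> \<Longrightarrow> Qp \<kappa> n = \<kappa> ^ n / fact n"
proof (induction n)
  case 0 then show ?case by (simp add: Qp_def)
next
  case (Suc n)
  then have mx: "max 1 (\<kappa> / real (Suc n)) = \<kappa> / real (Suc n)" by auto
  have ih: "Qp \<kappa> n = \<kappa> ^ n / fact n" using Suc.IH Suc.prems by simp
  have "Qp \<kappa> (Suc n) = \<kappa> ^ n / fact n * (\<kappa> / real (Suc n))" unfolding Qp_Suc ih mx ..
  also have "\<dots> = \<kappa> ^ Suc n / fact (Suc n)" by (simp add: field_simps)
  finally show ?case .
qed

lemma Qp_le_exp: "\<kappa> \<ge> 0 \<Longrightarrow> Qp \<kappa> n \<le> exp \<kappa>"
proof (induction n)
  case 0 then show ?case by (simp add: Qp_def)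
next
  case (Suc n)
  show ?case
  proof (cases "\<kappa> \<le> real (Suc n)")
    case True
    then have "max 1 (\<kappa> / real (Suc n)) = 1" by (auto simp: field_simps)
    then show ?thesis using Suc by (simp add: Qp_Suc)
  next
    case False
    have "Qp \<kappa> (Suc n) = \<kappa> ^ Suc n / fact (Suc n)" by (rule Qp_small) (use False in simp)
    also have "\<dots> \<le> exp \<kappa>" by (rule pow_fact_le_exp) (rule Suc.prems)
    finally show ?thesis .
  qed
qed

lemma Qp_le1: "\<kappa> \<le> 1 \<Longrightarrow> Qp \<kappa> n = 1"
  unfolding Qp_def by (rule prod.neutral) (auto simp: field_simps)

lemma final_const:
  assumes s: "\<sigma> \<ge> 0"
  shows "exp \<sigma> * Qp (2 * \<sigma> * exp 1 ^ 2 / (exp 1 - 1)^3) n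
    \<le> exp (max \<sigma> (\<sigma> * exp 1 ^ 2 + 2 * \<sigma> - 1))"
proof -
  define e :: real where "e = exp 1"
  have eb: "2718/1000 < e" "e < 272/100" using e_gt e_lt by (auto simp: e_def)
  define r where "r = 2 * e ^ 2 / (e - 1)^3"
  have c1: "(e - 1)^3 \<ge> (1718/1000)^3" using eb by (intro power_mono) auto
  have c2: "e ^ 2 \<le> (272/100)^2" using eb by (intro power_mono) auto
  have d: "(e - 1)^3 > 0" using eb by simp
  have "2 * e ^ 2 < 3 * (e - 1)^3"
  proof -
    have "2 * e ^ 2 \<le> 2 * (272/100)^2" using c2 by simp
    moreover have "3 * (1718/1000)^3 \<le> 3 * (e - 1)^3" using c1 by simp
    moreover have "2 * (272/100)^2 < 3 * (1718/1000::real)^3" by (simp add: power2_eq_square power3_eq_cube)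
    ultimately show ?thesis by linarith
  qed
  then have r3: "r < 3" using d by (simp add: r_def divide_less_eq)
  have r0: "r \<ge> 0" using d by (simp add: r_def)
  have e2: "e ^ 2 \<ge> (2718/1000)^2" using eb by (intro power_mono) auto
  have k: "2 * \<sigma> * e ^ 2 / (e - 1)^3 = \<sigma> * r" by (simp add: r_def)
  show ?thesis
  proof (cases "\<sigma> * r \<le> 1")
    case True
    then show ?thesis using k Qp_le1[of "\<sigma> * r" n] by (simp add: e_def)
  next
    case False
    have "\<sigma> * r \<le> \<sigma> * 3" using r3 s by (intro mult_left_mono) auto
    then have "\<sigma> * 3 > 1" using False by linarith
    have n5: "(2718/1000::real)^2 > 5" by (simp add: power2_eq_square)
    have "e ^ 2 + 1 - r \<ge> 3" using n5 e2 r3 by linarith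
    then have "\<sigma> * (e ^ 2 + 1 - r) \<ge> \<sigma> * 3" using s
      by (intro mult_left_mono) auto
    then have A: "\<sigma> + \<sigma> * r \<le> \<sigma> * e ^ 2 + 2 * \<sigma> - 1"
      using \<open>\<sigma> * 3 > 1\<close> by (simp add: algebra_simps)
    have "exp \<sigma> * Qp (\<sigma> * r) n \<le> exp \<sigma> * exp (\<sigma> * r)"
      using Qp_le_exp[of "\<sigma> * r" n] s r0 by (intro mult_left_mono) auto
    also have "\<dots> = exp (\<sigma> + \<sigma> * r)" by (simp add: exp_add)
    also have "\<dots> \<le> exp (max \<sigma> (\<sigma> * e ^ 2 + 2 * \<sigma> - 1))" using A by simp
    finally show ?thesis using k by (simp add: e_def)
  qed
qed




locale Eloc =
  fixes g :: "(nat \<Rightarrow> real) \<Rightarrow> real" and b :: "nat \<Rightarrow> real" and \<sigma> :: real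
  assumes gs: "\<And>js i y. y \<in> paramU \<Longrightarrow> HasD (Dl js g) (Dl (i#js) g y) i y"
    and gb: "\<And>js y. y \<in> paramU \<Longrightarrow> \<bar>Dl js g y\<bar> \<le> \<sigma> * fact (length js + 1) * prod_list (map b js)"
    and bnn: "\<And>j. b j \<ge> 0" and s: "\<sigma> \<ge> 0"
begin

definition E where "E z = exp (g z)"

lemma E_HasD: assumes y: "y \<in> paramU" shows "HasD E (E y * Dl [j] g y) j y"
proof -
  have "((\<lambda>t. g (y(j:=t))) has_real_derivative Dl [j] g y) (at (y j) within Iv)"
    using gs[OF y, of "[]" j] by (simp add: HasD_def)
  from DERIV_chain2[OF DERIV_exp this]
  show ?thesis by (simp add: HasD_def E_def[abs_def])
qed

lemma E1: "y \<in> paramU \<Longrightarrow> pdiff j E y = E y * Dl [j] g y"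
  by (rule pdiff_eq[OF _ E_HasD])

lemma E_app: assumes y: "y \<in> paramU"
  shows "Dl (js @ [j]) E y = Dl js (\<lambda>z. E z * Dl [j] g z) y"
  unfolding Dl_append by (rule Dl_cong[OF _ y]) (simp add: E1 Dl_Cons)

lemma gj_smooth: "smooth_upto n (Dl [j] g)"
  unfolding smooth_upto_def
proof (intro allI impI)
  fix ks :: "nat list" and i :: nat and y assume "length ks < n" "y \<in> paramU"
  then show "HasD (Dl ks (Dl [j] g)) (Dl (i # ks) (Dl [j] g) y) i y"
    using gs[of y "ks @ [j]" i] by (simp add: Dl_append[symmetric])
qed

lemma E_sum: assumes IH: "smooth_upto n E" and len: "length js \<le> n" and y: "y \<in> paramU"
  shows "Dl (js @ [j]) E y = (\<Sum>(p,q)\<leftarrow>splits js. Dl p E y * Dl (q @ [j]) g y)"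
proof -
  have "Dl (js @ [j]) E y = (\<Sum>(p,q)\<leftarrow>splits js. Dl p E y * Dl q (Dl [j] g) y)"
    unfolding E_app[OF y] by (rule leibniz[OF IH gj_smooth len y])
  then show ?thesis by (simp add: Dl_append)
qed

lemma E_smooth: "smooth_upto n E"
proof (induction n)
  case 0 then show ?case by (simp add: smooth_upto_def)
next
  case (Suc n)
  show ?case unfolding smooth_upto_def
  proof (intro allI impI)
    fix js :: "nat list" and i :: nat and y assume len: "length js < Suc n" and y: "y \<in> paramU"
    show "HasD (Dl js E) (Dl (i # js) E y) i y"
    proof (cases "length js < n")
      case True then show ?thesis using Suc y unfolding smooth_upto_def by blast
    next
      case False
      show ?thesis
      proof (cases js rule: rev_exhaust)
        case Nil
        have "Dl [i] E y = E y * Dl [i] g y" using E1[OF y] by (simp add: Dl_Cons)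
        then show ?thesis using E_HasD[OF y, of i] Nil by (simp add: Dl_Cons)
      next
        case (snoc js' j)
        with len False have lj: "length js' < n" by simp
        define V where "V = (\<Sum>(p,q)\<leftarrow>splits js'. Dl (i#p) E y * Dl (q @ [j]) g y + Dl p E y * Dl (i#(q @ [j])) g y)"
        have hd: "HasD (\<lambda>z. \<Sum>(p,q)\<leftarrow>splits js'. Dl p E z * Dl (q @ [j]) g z) V i y"
          unfolding V_def split_def
        proof (rule HasD_sum_list)
          fix x assume x: "x \<in> set (splits js')"
          then have "length (fst x) + length (snd x) = length js'" using splits_len[of "fst x" "snd x"] by simp
          then have "length (fst x) < n" using lj by simp
          then have h1: "HasD (Dl (fst x) E) (Dl (i # fst x) E y) i y" using Suc y unfolding smooth_upto_def by blast
          have h2: "HasD (Dl (snd x @ [j]) g) (Dl (i # (snd x @ [j])) g y) i y" by (rule gs[OF y])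
          show "HasD (\<lambda>z. Dl (fst x) E z * Dl (snd x @ [j]) g z)
              (Dl (i # fst x) E y * Dl (snd x @ [j]) g y + Dl (fst x) E y * Dl (i # snd x @ [j]) g y) i y"
            using HasD_mult[OF h1 h2] by simp
        qed
        have hd2: "HasD (Dl js E) V i y"
          unfolding snoc by (rule HasD_cong[OF y _ hd]) (rule E_sum[OF Suc.IH], use lj in auto)
        then have "Dl (i#js) E y = V" unfolding Dl_Cons by (rule pdiff_eq[OF y])
        with hd2 show ?thesis by simp
      qed
    qed
  qed
qed

definition \<kappa> where "\<kappa> = 2 * \<sigma> * exp 1 ^ 2 / (exp 1 - 1)^3"

lemma E_bound:
  "y \<in> paramU \<Longrightarrow> \<bar>Dl js E y\<bar> \<le> fact (length js) * exp 1 ^ length js * (exp \<sigma> * Qp \<kappa> (length js)) * prod_list (map b js)"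
proof (induction "length js" arbitrary: js y rule: less_induct)
  case less
  note y = less.prems
  show ?case
  proof (cases js rule: rev_exhaust)
    case Nil
    have "g y \<le> \<sigma>" using gb[OF y, of "[]"] by simp
    then show ?thesis using Nil by (simp add: E_def Qp_def)
  next
    case (snoc js' j)
    define n where "n = length js'"
    define e :: real where "e = exp 1"
    have e1: "e > 1" using e_gt by (simp add: e_def)
    have pb: "prod_list (map b xs) \<ge> 0" for xs by (rule prod_list_nonneg) (use bnn in auto)
    define C where "C = exp \<sigma> * Qp \<kappa> n * \<sigma> * prod_list (map b js') * b j"
    have C0: "C \<ge> 0" unfolding C_def using s pb bnn Qp_ge1[of \<kappa> n]
      by (intro mult_nonneg_nonneg) auto
    have "\<bar>Dl js E y\<bar> = \<bar>\<Sum>(p,q)\<leftarrow>splits js'. Dl p E y * Dl (q @ [j]) g y\<bar>"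
      unfolding snoc by (subst E_sum[OF E_smooth _ y]) auto
    also have "\<dots> \<le> (\<Sum>(p,q)\<leftarrow>splits js'. \<bar>Dl p E y * Dl (q @ [j]) g y\<bar>)"
      using norm_sum_list_le[of "\<lambda>x. Dl (fst x) E y * Dl (snd x @ [j]) g y" "splits js'"]
      by (simp add: split_def)
    also have "\<dots> \<le> (\<Sum>(p,q)\<leftarrow>splits js'. C * (fact (length p) * e ^ length p * fact (length q + 2)))"
      unfolding split_def
    proof (rule sum_list_mono)
      fix x assume x: "x \<in> set (splits js')"
      obtain p q where pq: "x = (p, q)" by force
      have lens: "length p + length q = n" using splits_len[of p q js'] x pq by (simp add: n_def)
      have "length p < length js" using lens snoc n_def by simp
      from less.hyps[OF this y]
      have A: "\<bar>Dl p E y\<bar> \<le> fact (length p) * e ^ length p * (exp \<sigma> * Qp \<kappa> (length p)) * prod_list (map b p)"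
        by (simp add: e_def)
      have B: "\<bar>Dl (q @ [j]) g y\<bar> \<le> \<sigma> * fact (length q + 2) * (prod_list (map b q) * b j)"
        using gb[OF y, of "q @ [j]"] by (simp add: numeral_2_eq_2)
      have Q: "Qp \<kappa> (length p) \<le> Qp \<kappa> n" using lens by (intro Qp_mono) simp
      have A': "\<bar>Dl p E y\<bar> \<le> fact (length p) * e ^ length p * (exp \<sigma> * Qp \<kappa> n) * prod_list (map b p)"
      proof -
        have X0: "0 \<le> fact (length p) * e ^ length p" using e1 by simp
        have "exp \<sigma> * Qp \<kappa> (length p) \<le> exp \<sigma> * Qp \<kappa> n" using Q by simp
        then have "fact (length p) * e ^ length p * (exp \<sigma> * Qp \<kappa> (length p)) \<le> fact (length p) * e ^ length p * (exp \<sigma> * Qp \<kappa> n)"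
          using X0 by (rule mult_left_mono)
        then have "fact (length p) * e ^ length p * (exp \<sigma> * Qp \<kappa> (length p)) * prod_list (map b p)
            \<le> fact (length p) * e ^ length p * (exp \<sigma> * Qp \<kappa> n) * prod_list (map b p)"
          using pb[of p] by (rule mult_right_mono)
        then show ?thesis using A by linarith
      qed
      have "\<bar>Dl p E y * Dl (q @ [j]) g y\<bar> \<le>
          (fact (length p) * e ^ length p * (exp \<sigma> * Qp \<kappa> n) * prod_list (map b p)) *
          (\<sigma> * fact (length q + 2) * (prod_list (map b q) * b j))"
        unfolding abs_mult using A' B by (intro mult_mono) auto
      also have "\<dots> = (exp \<sigma> * Qp \<kappa> n * \<sigma> * (prod_list (map b p) * prod_list (map b q)) * b j) * (fact (length p) * e ^ length p * fact (length q + 2))"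
        by (simp add: algebra_simps)
      also have "\<dots> = C * (fact (length p) * e ^ length p * fact (length q + 2))"
        using splits_prod[of p q js' b] x pq by (simp add: C_def)
      finally show "\<bar>Dl (fst x) E y * Dl (snd x @ [j]) g y\<bar> \<le> C * (fact (length (fst x)) * e ^ length (fst x) * fact (length (snd x) + 2))"
        by (simp add: pq)
    qed
    also have "\<dots> = C * (\<Sum>(p,q)\<leftarrow>splits js'. fact (length p) * e ^ length p * fact (length q + 2))"
      by (simp add: split_def sum_list_const_mult)
    also have "(\<Sum>(p,q)\<leftarrow>splits js'. fact (length p) * e ^ length p * fact (length q + 2)) =
        (\<Sum>k\<le>n. real (n choose k) * (fact k * e ^ k * fact (n - k + 2)))"
      using splits_sum[of "\<lambda>k l. fact k * e ^ k * fact (l + 2)" js'] by (simp add: n_def)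
    also have "C * \<dots> \<le> C * (fact n * e ^ n * (2 * e ^ 3 / (e - 1)^3))"
      using conv_sum_le[of n] C0 by (intro mult_left_mono) (auto simp: e_def)
    also have "\<dots> = exp \<sigma> * Qp \<kappa> n * prod_list (map b js) * fact n * e ^ (n+1) * \<kappa>"
      using e1 by (simp add: C_def snoc \<kappa>_def e_def[symmetric] field_simps power3_eq_cube power2_eq_square)
    also have "\<dots> \<le> exp \<sigma> * Qp \<kappa> n * prod_list (map b js) * e ^ (n+1) * (fact (n+1) * max 1 (\<kappa> / real (Suc n)))"
    proof -
      have H1: "fact n * \<kappa> \<le> fact (n+1) * max 1 (\<kappa> / real (Suc n))"
      proof -
        have "\<kappa> \<le> real (Suc n) * max 1 (\<kappa> / real (Suc n))"
          by (cases "\<kappa> / real (Suc n) \<le> 1") (auto simp: field_simps)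
        then have "fact n * \<kappa> \<le> fact n * (real (Suc n) * max 1 (\<kappa> / real (Suc n)))"
          by (intro mult_left_mono) auto
        then show ?thesis by (simp add: algebra_simps)
      qed
      have H2: "exp \<sigma> * Qp \<kappa> n * prod_list (map b js) * e ^ (n+1) \<ge> 0"
        using pb[of js] Qp_ge1[of \<kappa> n] e1 by (intro mult_nonneg_nonneg) auto
      have "(exp \<sigma> * Qp \<kappa> n * prod_list (map b js) * e ^ (n+1)) * (fact n * \<kappa>)
          \<le> (exp \<sigma> * Qp \<kappa> n * prod_list (map b js) * e ^ (n+1)) * (fact (n+1) * max 1 (\<kappa> / real (Suc n)))"
        by (rule mult_left_mono[OF H1 H2])
      then show ?thesis by (simp only: mult_ac)
    qed
    also have "\<dots> = fact (length js) * exp 1 ^ length js * (exp \<sigma> * Qp \<kappa> (length js)) * prod_list (map b js)"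
      by (simp add: snoc n_def e_def Qp_Suc algebra_simps)
    finally show ?thesis .
  qed
qed

end



lemma prod_list_map_concat: "prod_list (map (c::nat \<Rightarrow> real) (concat xss)) = prod_list (map (\<lambda>xs. prod_list (map c xs)) xss)"
  by (induction xss) simp_all

lemma prod_list_scale: "prod_list (map (\<lambda>j. a * (c::nat \<Rightarrow> real) j) js) = a ^ length js * prod_list (map c js)"
  by (induction js) (simp_all add: algebra_simps)

lemma idx_len: assumes "finite (msupp \<nu>)" shows "length (idx_list \<nu>) = mabs \<nu>"
proof -
  have "length (idx_list \<nu>) = (\<Sum>j\<leftarrow>sorted_list_of_set (msupp \<nu>). \<nu> j)"
    by (simp add: idx_list_def length_concat o_def)
  also have "\<dots> = (\<Sum>j\<in>msupp \<nu>. \<nu> j)"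
    using sum.distinct_set_conv_list[of "sorted_list_of_set (msupp \<nu>)" \<nu>] assms by simp
  finally show ?thesis by (simp add: mabs_def)
qed

lemma idx_prod: assumes "finite (msupp \<nu>)" shows "prod_list (map c (idx_list \<nu>)) = mpow c \<nu>"
proof -
  have "prod_list (map c (idx_list \<nu>)) = (\<Prod>j\<leftarrow>sorted_list_of_set (msupp \<nu>). c j ^ \<nu> j)"
    by (simp add: idx_list_def prod_list_map_concat o_def)
  also have "\<dots> = (\<Prod>j\<in>msupp \<nu>. c j ^ \<nu> j)"
    using prod.distinct_set_conv_list[of "sorted_list_of_set (msupp \<nu>)" "\<lambda>j. c j ^ \<nu> j"] assms by simp
  finally show ?thesis by (simp add: mpow_def)
qed

theorem mainTheorem7:
  fixes J :: "'x::{real_inner,complete_space} \<Rightarrow> 'h::{real_inner,complete_space}"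
    and Dt :: "'x \<Rightarrow> 'g::{real_inner,complete_space}"
    and ET :: "'x \<Rightarrow> 'l::{real_inner,complete_space}"
    and B0 :: "'x \<Rightarrow> 'y::{real_inner,complete_space}"
    and Bj :: "nat \<Rightarrow> 'x \<Rightarrow> 'y"
    and b :: "nat \<Rightarrow> real"
    and \<beta>1 \<alpha>1 \<alpha>2 \<theta> :: real
    and f :: 'y and uhat :: 'x
  assumes J_lin: "bounded_linear J" and Dt_lin: "bounded_linear Dt"
    and X_norm: "\<And>w. (norm w)\<^sup>2 = (norm (J w))\<^sup>2 + (norm (Dt w))\<^sup>2"
    and ET_lin: "bounded_linear ET"
    and B0_lin: "bounded_linear B0"
    and Bj_lin: "\<And>j. bounded_linear (Bj j)"
    and b_nonneg: "\<And>j. b j \<ge> 0" and b_summable: "summable b"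
    and Bj_bound: "\<And>j w. norm (Bj j w) \<le> \<beta>1 * b j * norm (J w)"
    and \<beta>1_pos: "\<beta>1 > 0"
    and B_bij: "\<And>y. y \<in> paramU \<Longrightarrow> bij (Bop B0 Bj y)"
    and B_inv_bound: "\<And>y g. y \<in> paramU \<Longrightarrow> norm (inv (Bop B0 Bj y) g) \<le> norm g / \<beta>1"
    and \<alpha>_nonneg: "\<alpha>1 \<ge> 0" "\<alpha>2 \<ge> 0" and \<alpha>_pos: "\<alpha>1 + \<alpha>2 > 0"
    and \<theta>_pos: "\<theta> > 0"
  shows "\<forall>y\<in>paramU. \<forall>\<nu>\<in>multi_indices.
    (let \<sigma> = (\<alpha>1 + \<alpha>2 * (onorm ET)\<^sup>2) / 2 * (norm f / \<beta>1 + norm uhat)\<^sup>2 * \<theta> in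
     \<bar>dnu \<nu> (\<lambda>y'. exp (\<theta> * Phi \<alpha>1 \<alpha>2 J ET B0 Bj f uhat y')) y\<bar>
       \<le> exp (max \<sigma> (\<sigma> * exp 1 ^ 2 + 2 * \<sigma> - 1)) * fact (mabs \<nu>)
          * mpow (\<lambda>j. exp 1 * b j) \<nu>)"
proof (intro ballI)
  fix y \<nu> assume y: "y \<in> paramU" and \<nu>: "\<nu> \<in> multi_indices"
  have fin: "finite (msupp \<nu>)" using \<nu> by (simp add: multi_indices_def)
  interpret S: Ssetting J Dt B0 Bj b \<beta>1 f
    by (rule Ssetting.intro) (fact J_lin X_norm B0_lin Bj_lin b_nonneg b_summable Bj_bound \<beta>1_pos B_bij B_inv_bound)+
  define \<sigma> where "\<sigma> = (\<alpha>1 + \<alpha>2 * (onorm ET)\<^sup>2) / 2 * (norm f / \<beta>1 + norm uhat)\<^sup>2 * \<theta>"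
  define g where "g = (\<lambda>z. S.bf ET \<alpha>1 \<alpha>2 \<theta> (S.Gf uhat [] z) (S.Gf uhat [] z))"
  have th: "\<theta> \<ge> 0" using \<theta>_pos by simp
  have s0: "\<sigma> \<ge> 0" unfolding \<sigma>_def using \<alpha>_nonneg th by simp
  interpret E: Eloc g b \<sigma>
  proof
    show "HasD (Dl js g) (Dl (i # js) g y) i y" if "y \<in> paramU" for js i y
      unfolding g_def by (rule S.g_smooth[OF ET_lin \<alpha>_nonneg th that])
    show "\<bar>Dl js g y\<bar> \<le> \<sigma> * fact (length js + 1) * prod_list (map b js)" if "y \<in> paramU" for js y
      using S.g_bound[OF ET_lin \<alpha>_nonneg th that, of js uhat] unfolding g_def \<sigma>_def
      by (simp add: algebra_simps)
  qed (fact b_nonneg s0)+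
  have FE: "(\<lambda>y'. exp (\<theta> * Phi \<alpha>1 \<alpha>2 J ET B0 Bj f uhat y')) = E.E"
    by (rule ext, simp only: E.E_def, simp add: g_def S.Phi_eq)
  define n where "n = mabs \<nu>"
  have ln: "length (idx_list \<nu>) = n" using idx_len[OF fin] by (simp add: n_def)
  have pm: "exp 1 ^ n * prod_list (map b (idx_list \<nu>)) = mpow (\<lambda>j. exp 1 * b j) \<nu>"
    using prod_list_scale[of "exp 1" b "idx_list \<nu>"] idx_prod[OF fin, of "\<lambda>j. exp 1 * b j"] ln by simp
  have pb: "prod_list (map b (idx_list \<nu>)) \<ge> 0" by (rule prod_list_nonneg) (use b_nonneg in auto)
  have "\<bar>dnu \<nu> (\<lambda>y'. exp (\<theta> * Phi \<alpha>1 \<alpha>2 J ET B0 Bj f uhat y')) y\<bar> = \<bar>Dl (idx_list \<nu>) E.E y\<bar>"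
    by (simp add: FE dnu_def Dl_def)
  also have "\<dots> \<le> fact n * exp 1 ^ n * (exp \<sigma> * Qp E.\<kappa> n) * prod_list (map b (idx_list \<nu>))"
    using E.E_bound[OF y, of "idx_list \<nu>"] by (simp add: ln)
  also have "\<dots> = (exp \<sigma> * Qp E.\<kappa> n) * (fact n * (exp 1 ^ n * prod_list (map b (idx_list \<nu>))))"
    by (simp add: algebra_simps)
  also have "\<dots> \<le> exp (max \<sigma> (\<sigma> * exp 1 ^ 2 + 2 * \<sigma> - 1)) * (fact n * (exp 1 ^ n * prod_list (map b (idx_list \<nu>))))"
    using final_const[OF s0, of n] pb by (intro mult_right_mono) (auto simp: E.\<kappa>_def)
  finally show "let \<sigma> = (\<alpha>1 + \<alpha>2 * (onorm ET)\<^sup>2) / 2 * (norm f / \<beta>1 + norm uhat)\<^sup>2 * \<theta> in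
     \<bar>dnu \<nu> (\<lambda>y'. exp (\<theta> * Phi \<alpha>1 \<alpha>2 J ET B0 Bj f uhat y')) y\<bar>
       \<le> exp (max \<sigma> (\<sigma> * exp 1 ^ 2 + 2 * \<sigma> - 1)) * fact (mabs \<nu>)
          * mpow (\<lambda>j. exp 1 * b j) \<nu>"
    unfolding Let_def \<sigma>_def[symmetric] pm[symmetric] n_def[symmetric] by (simp add: algebra_simps)
qed


end
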